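(* There is an absolute constant $c>0$ such that for all finite nonempty sets $\mathcal{A},\mathcal{B},\mathcal{C}$ of nonzero complex numbers, $$|\mathcal{A}\mathcal{C}+\mathcal{A}\mathcal{C}|\,|\mathcal{B}\mathcal{C}+\mathcal{B}\mathcal{C}|\geq c\,|\mathcal{A}/\mathcal{B}|\,|\mathcal{C}|^2.$$
   Context: For finite sets $X,Y\subset\mathbb{C}$, $X+Y:=\{x+y:x\in X,y\in Y\}$, $XY:=\{xy:x\in X,y\in Y\}$, and for $0\notin Y$, $X/Y:=\{x/y:x\in X,y\in Y\}$. *)

theory Defs
  imports Complex_Main
begin

definition sumset :: "complex set \<Rightarrow> complex set \<Rightarrow> complex set" where
  "sumset X Y = {x + y | x y. x \<in> X \<and> y \<in> Y}"

definition prodset :: "complex set \<Rightarrow> complex set \<Rightarrow> complex set" where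
  "prodset X Y = {x * y | x y. x \<in> X \<and> y \<in> Y}"

definition quotset :: "complex set \<Rightarrow> complex set \<Rightarrow> complex set" where
  "quotset X Y = {x / y | x y. x \<in> X \<and> y \<in> Y}"

end

theory Submission imports Defs begin

lemma re_cnj_arg: "Re (z * cnj w) = cmod z * cmod w * cos (Arg z - Arg w)"
proof -
  have "z * cnj w = rcis (cmod z) (Arg z) * rcis (cmod w) (- Arg w)"
    by (simp add: rcis_cmod_Arg rcis_cnj[symmetric])
  also have "\<dots> = rcis (cmod z * cmod w) (Arg z - Arg w)" by (simp add: rcis_mult)
  finally show ?thesis by simp
qed

definition cls :: "complex \<Rightarrow> nat" where
  "cls z = nat \<lfloor>(Arg z + pi) * 4 / pi\<rfloor>"

lemma cls_range: "cls z \<in> {0..8}"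
proof -
  have "(Arg z + pi) * 4 / pi \<le> 8" using Arg_bounded[of z] pi_gt_zero
    by (simp add: field_simps)
  have "\<And>x::real. x \<le> 8 \<Longrightarrow> nat \<lfloor>x\<rfloor> \<le> 8" by linarith
  from this[OF \<open>_ \<le> 8\<close>] show ?thesis unfolding cls_def by auto
qed

lemma cls_close: assumes "cls z = cls w" shows "\<bar>Arg z - Arg w\<bar> < pi / 4"
proof -
  let ?x = "(Arg z + pi) * 4 / pi" and ?y = "(Arg w + pi) * 4 / pi"
  have "?x \<ge> 0" "?y \<ge> 0" using Arg_bounded[of z] Arg_bounded[of w] pi_gt_zero
    by (auto intro!: divide_nonneg_pos)
  hence "\<lfloor>?x\<rfloor> = \<lfloor>?y\<rfloor>" using assms unfolding cls_def
    by (metis nat_eq_iff2 zero_le_floor)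
  hence "\<bar>?x - ?y\<bar> < 1" by linarith
  moreover have "?x - ?y = (Arg z - Arg w) * 4 / pi" by (simp add: field_simps)
  ultimately have "\<bar>(Arg z - Arg w) * 4 / pi\<bar> < 1" by simp
  also have "\<bar>(Arg z - Arg w) * 4 / pi\<bar> = \<bar>Arg z - Arg w\<bar> * 4 / pi"
    unfolding abs_divide abs_mult using pi_gt_zero by simp
  finally show ?thesis using pi_gt_zero by (simp add: field_simps)
qed

lemma cmod_sum_gt:
  assumes "Re (z1 * cnj z2) > 0"
  shows "cmod z2 < cmod (z1 + z2)"
proof -
  have p: "Re z1 * Re z2 + Im z1 * Im z2 > 0" using assms by simp
  have "(cmod (z1+z2))^2 - (cmod z2)^2 = (Re z1)^2 + (Im z1)^2 + 2*(Re z1 * Re z2 + Im z1 * Im z2)"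
    unfolding cmod_power2 by (simp add: power2_eq_square algebra_simps)
  moreover have "0 \<le> (Re z1)^2 + (Im z1)^2" by simp
  moreover have "\<And>X Y P Q::real. X - Y = P + 2*Q \<Longrightarrow> 0\<le>P \<Longrightarrow> 0<Q \<Longrightarrow> Y < X" by linarith
  ultimately have "(cmod z2)^2 < (cmod (z1+z2))^2" using p by blast
  thus ?thesis by (rule power2_less_imp_less) simp
qed

lemma max_sq_aux: assumes "0 \<le> a" "0 \<le> (b::real)" shows "a^2 + b^2 - a*b \<le> (max a b)^2"
proof (cases "a \<le> b")
  case True
  have "a*a \<le> a*b" using True assms by (intro mult_left_mono)
  thus ?thesis using True by (simp add: max_def power2_eq_square)
next
  case False
  have "b*b \<le> a*b" using False assms by (intro mult_right_mono) auto
  thus ?thesis using False by (simp add: max_def power2_eq_square)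
qed

lemma same_cls_far:
  assumes "cls (v1) = cls (v2)" "v1 \<noteq> 0" "v2 \<noteq> 0"
  shows "cmod (v1 - v2) < max (cmod v1) (cmod v2)"
proof -
  have "cos (Arg v1 - Arg v2) > cos (pi/3)"
  proof -
    have "\<bar>Arg v1 - Arg v2\<bar> < pi/4" using cls_close[OF assms(1)] .
    hence "\<bar>Arg v1 - Arg v2\<bar> < pi/3" using pi_gt_zero by linarith
    hence "cos (pi/3) < cos \<bar>Arg v1 - Arg v2\<bar>"
      by (intro cos_monotone_0_pi) auto
    thus ?thesis by simp
  qed
  hence c: "cos (Arg v1 - Arg v2) > 1/2" by (simp add: cos_60)
  have r: "Re (v1 * cnj v2) > cmod v1 * cmod v2 / 2"
    using re_cnj_arg[of v1 v2] c assms by (simp add: mult_strict_left_mono)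
  have "(cmod (v1 - v2))^2 = (cmod v1)^2 + (cmod v2)^2 - 2 * Re (v1 * cnj v2)"
    unfolding cmod_power2 by (simp add: power2_eq_square algebra_simps)
  also have "\<dots> < (cmod v1)^2 + (cmod v2)^2 - cmod v1 * cmod v2" using r by simp
  also have "\<dots> \<le> (max (cmod v1) (cmod v2))^2"
    by (rule max_sq_aux) auto
  finally show ?thesis by (rule power2_less_imp_less) (simp add: le_max_iff_disj)
qed

lemma finite_sumset: "finite X \<Longrightarrow> finite Y \<Longrightarrow> finite (sumset X Y)"
proof -
  assume "finite X" "finite Y"
  moreover have "sumset X Y = (\<lambda>(x,y). x + y) ` (X \<times> Y)" unfolding sumset_def by auto
  ultimately show ?thesis by simp
qed

lemma finite_prodset: "finite X \<Longrightarrow> finite Y \<Longrightarrow> finite (prodset X Y)"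
proof -
  assume "finite X" "finite Y"
  moreover have "prodset X Y = (\<lambda>(x,y). x * y) ` (X \<times> Y)" unfolding prodset_def by auto
  ultimately show ?thesis by simp
qed

lemma finite_quotset: "finite X \<Longrightarrow> finite Y \<Longrightarrow> finite (quotset X Y)"
proof -
  assume "finite X" "finite Y"
  moreover have "quotset X Y = (\<lambda>(x,y). x / y) ` (X \<times> Y)" unfolding quotset_def by auto
  ultimately show ?thesis by simp
qed

lemma sumset_mono: "X \<subseteq> X' \<Longrightarrow> Y \<subseteq> Y' \<Longrightarrow> sumset X Y \<subseteq> sumset X' Y'"
  unfolding sumset_def by blast
lemma prodset_mono: "X \<subseteq> X' \<Longrightarrow> Y \<subseteq> Y' \<Longrightarrow> prodset X Y \<subseteq> prodset X' Y'"
  unfolding prodset_def by blast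

lemma card_C_le:
  assumes "finite X" "finite C" "x \<in> X" "x \<noteq> 0"
  shows "card C \<le> card (sumset (prodset X C) (prodset X C))"
proof (cases "C = {}")
  case True thus ?thesis by simp
next
  case False
  then obtain c0 where c0: "c0 \<in> C" by blast
  have "inj_on (\<lambda>c. x * c + x * c0) C" using assms(4) by (auto simp: inj_on_def)
  moreover have "(\<lambda>c. x * c + x * c0) ` C \<subseteq> sumset (prodset X C) (prodset X C)"
    using assms(3) c0 unfolding sumset_def prodset_def by blast
  ultimately show ?thesis
    by (intro card_inj_on_le) (auto intro: finite_sumset finite_prodset assms)
qed

lemma card_T_le:
  assumes fin: "finite T"
    and lt: "\<forall>l\<in>T. cmod (\<sigma> - l) < d l"
    and far: "\<forall>l\<in>T. \<forall>l'\<in>T. l \<noteq> l' \<longrightarrow> d l \<le> cmod (l - l')"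
  shows "card T \<le> 10"
proof -
  have inj: "inj_on (\<lambda>l. cls (l - \<sigma>)) (T - {\<sigma>})"
  proof (rule inj_onI, rule ccontr)
    fix l1 l2 assume l1: "l1 \<in> T - {\<sigma>}" and l2: "l2 \<in> T - {\<sigma>}"
      and eq: "cls (l1 - \<sigma>) = cls (l2 - \<sigma>)" and ne: "l1 \<noteq> l2"
    have "cmod ((l1 - \<sigma>) - (l2 - \<sigma>)) < max (cmod (l1 - \<sigma>)) (cmod (l2 - \<sigma>))"
      using same_cls_far[OF eq] l1 l2 by auto
    moreover have "cmod (l1 - l2) > cmod (l1 - \<sigma>)"
    proof -
      have "cmod (\<sigma> - l1) < d l1" "d l1 \<le> cmod (l1 - l2)" using lt far l1 l2 ne by auto
      thus ?thesis by (simp add: norm_minus_commute)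
    qed
    moreover have "cmod (l1 - l2) > cmod (l2 - \<sigma>)"
    proof -
      have "cmod (\<sigma> - l2) < d l2" "d l2 \<le> cmod (l2 - l1)" using lt far l1 l2 ne by auto
      thus ?thesis by (simp add: norm_minus_commute)
    qed
    ultimately show False by simp
  qed
  have "(\<lambda>l. cls (l - \<sigma>)) ` (T - {\<sigma>}) \<subseteq> {0..8}" using cls_range by auto
  hence "card (T - {\<sigma>}) \<le> card {0..8::nat}"
    by (rule card_inj_on_le[OF inj]) simp
  hence "card (T - {\<sigma>}) \<le> 9" by simp
  moreover have "card T \<le> card (T - {\<sigma>}) + 1"
    using fin by (cases "\<sigma> \<in> T") (auto simp: card_Diff_singleton_if)
  ultimately show ?thesis by linarith
qed

lemma main_lemma:
  fixes A B C :: "complex set"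
  assumes fA: "finite A" and fB: "finite B" and fC: "finite C"
    and A0: "0 \<notin> A" and B0: "0 \<notin> B" and C0: "0 \<notin> C" and Cne: "C \<noteq> {}"
    and pos: "\<forall>b\<in>B. \<forall>b'\<in>B. \<forall>c\<in>C. \<forall>c'\<in>C. Re ((b*c) * cnj (b'*c')) > 0"
  shows "card (quotset A B) * card C ^ 2 \<le>
           10 * (card (sumset (prodset A C) (prodset A C)) * card (sumset (prodset B C) (prodset B C)))"
proof -
  define L where "L = quotset A B"
  define SA where "SA = sumset (prodset A C) (prodset A C)"
  define SB where "SB = sumset (prodset B C) (prodset B C)"
  have fL: "finite L" unfolding L_def using fA fB by (rule finite_quotset)
  have fSA: "finite SA" unfolding SA_def using fA fC by (intro finite_sumset finite_prodset)
  have fSB: "finite SB" unfolding SB_def using fB fC by (intro finite_sumset finite_prodset)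
  show ?thesis
  proof (cases "card L \<le> 1")
    case True
    show ?thesis
    proof (cases "L = {}")
      case True thus ?thesis unfolding L_def by simp
    next
      case False
      then obtain a b where "a \<in> A" "b \<in> B" unfolding L_def quotset_def by blast
      hence "card C \<le> card SA" "card C \<le> card SB" unfolding SA_def SB_def
        using card_C_le[OF fA fC \<open>a \<in> A\<close>] card_C_le[OF fB fC \<open>b \<in> B\<close>] A0 B0
          \<open>a \<in> A\<close> \<open>b \<in> B\<close> by auto
      hence "card C * card C \<le> card SA * card SB" by (rule mult_le_mono)
      hence "card L * card C ^ 2 \<le> card SA * card SB"
        using \<open>card L \<le> 1\<close> proof -
        have "card L * card C ^ 2 \<le> 1 * card C ^ 2" using \<open>card L \<le> 1\<close> by (rule mult_le_mono1)
        moreover have "1 * card C ^ 2 = card C * card C" by (simp add: power2_eq_square)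
        ultimately show ?thesis using \<open>card C * card C \<le> card SA * card SB\<close> by linarith
      qed
      thus ?thesis unfolding L_def SA_def SB_def by linarith
    qed
  next
    case False
    hence L2: "card L \<ge> 2" by simp
    have "\<forall>l\<in>L. \<exists>p. fst p \<in> A \<and> snd p \<in> B \<and> l = fst p / snd p"
      unfolding L_def quotset_def by auto
    from bchoice[OF this] obtain ab where ab: "\<forall>l\<in>L. fst (ab l) \<in> A \<and> snd (ab l) \<in> B \<and> l = fst (ab l) / snd (ab l)"
      by blast
    define aa where "aa l = fst (ab l)" for l
    define bb where "bb l = snd (ab l)" for l
    have aaA: "aa l \<in> A" and bbB: "bb l \<in> B" and bb0: "bb l \<noteq> 0" and aaq: "l = aa l / bb l"
      if "l \<in> L" for l
      using ab that B0 unfolding aa_def bb_def by auto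
    have aab: "aa l = l * bb l" if "l \<in> L" for l
    proof -
      have "l * bb l = aa l / bb l * bb l" using aaq[OF that] by (rule arg_cong[where f="\<lambda>x. x * bb l"])
      also have "\<dots> = aa l" using bb0[OF that] by simp
      finally show ?thesis by simp
    qed
    define N where "N l = arg_min_on (\<lambda>m. cmod (l - m)) (L - {l})" for l
    have ne: "L - {l} \<noteq> {}" for l
    proof
      assume "L - {l} = {}"
      hence "L \<subseteq> {l}" by blast
      hence "card L \<le> 1" using card_mono[of "{l}" L] by simp
      thus False using L2 by simp
    qed
    have NL: "N l \<in> L" and Nne: "N l \<noteq> l" for l
      using arg_min_if_finite(1)[of "L - {l}" "\<lambda>m. cmod (l - m)"] fL ne
      unfolding N_def by auto
    have Nmin: "cmod (l - N l) \<le> cmod (l - l')" if "l' \<in> L" "l' \<noteq> l" for l l'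
      using arg_min_least[of "L - {l}" l' "\<lambda>m. cmod (l - m)"] fL ne that
      unfolding N_def by auto
    define F where "F = (\<lambda>(l::complex, c::complex, c'::complex).
        (bb l * c + bb (N l) * c', aa l * c + aa (N l) * c'))"
    define D where "D = L \<times> C \<times> C"
    have fD: "finite D" unfolding D_def using fL fC by simp
    have FD: "F ` D \<subseteq> SB \<times> SA"
    proof
      fix y assume "y \<in> F ` D"
      then obtain l c c' where y: "y = F (l, c, c')" and lL: "l \<in> L" and cC: "c \<in> C" and cC': "c' \<in> C"
        unfolding D_def by auto
      have "bb l * c \<in> prodset B C" "bb (N l) * c' \<in> prodset B C"
        "aa l * c \<in> prodset A C" "aa (N l) * c' \<in> prodset A C"
        unfolding prodset_def using lL NL[of l] aaA bbB cC cC' by blast+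
      hence "bb l * c + bb (N l) * c' \<in> SB" "aa l * c + aa (N l) * c' \<in> SA"
        unfolding SA_def SB_def sumset_def by blast+
      thus "y \<in> SB \<times> SA" unfolding y F_def by simp
    qed
    have fib: "card {x \<in> D. F x = s} \<le> 10" for s
    proof -
      obtain X Y where s: "s = (X, Y)" by (cases s)
      define T where "T = {l \<in> L. cmod (Y / X - l) < cmod (l - N l)}"
      have cT: "card T \<le> 10"
      proof (rule card_T_le[of T "Y/X" "\<lambda>l. cmod (l - N l)"])
        show "finite T" unfolding T_def using fL by simp
        show "\<forall>l\<in>T. cmod (Y / X - l) < cmod (l - N l)" unfolding T_def by auto
        show "\<forall>l\<in>T. \<forall>l'\<in>T. l \<noteq> l' \<longrightarrow> cmod (l - N l) \<le> cmod (l - l')"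
          unfolding T_def using Nmin by auto
      qed
      have inj: "inj_on fst {x \<in> D. F x = s}"
      proof (rule inj_onI)
        fix x y assume x: "x \<in> {x \<in> D. F x = s}" and y: "y \<in> {x \<in> D. F x = s}" and e: "fst x = fst y"
        obtain l c1 c1' where xx: "x = (l, c1, c1')" by (cases x) auto
        obtain c2 c2' where yy: "y = (l, c2, c2')" using e xx by (cases y) auto
        have lL: "l \<in> L" using x xx D_def by auto
        let ?m = "N l"
        have E1: "bb l * c1 + bb ?m * c1' = bb l * c2 + bb ?m * c2'"
          and E2: "aa l * c1 + aa ?m * c1' = aa l * c2 + aa ?m * c2'"
          using x y xx yy unfolding F_def by auto
        have "(?m - l) * bb ?m * (c1' - c2') =
              (aa l * c1 + aa ?m * c1' - (aa l * c2 + aa ?m * c2'))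
               - l * (bb l * c1 + bb ?m * c1' - (bb l * c2 + bb ?m * c2'))"
          using aab[OF lL] aab[OF NL[of l]] by (simp add: algebra_simps)
        also have "\<dots> = 0" using E1 E2 by simp
        finally have "c1' = c2'" using Nne[of l] bb0[OF NL[of l]] by simp
        moreover from this E1 have "c1 = c2" using bb0[OF lL] by simp
        ultimately show "x = y" using xx yy by simp
      qed
      have sub: "fst ` {x \<in> D. F x = s} \<subseteq> T"
      proof
        fix l assume "l \<in> fst ` {x \<in> D. F x = s}"
        then obtain c c' where cc: "(l, c, c') \<in> D" "F (l, c, c') = s" by auto
        have lL: "l \<in> L" and cC: "c \<in> C" and cC': "c' \<in> C" using cc D_def by auto
        let ?m = "N l"
        define z1 where "z1 = bb l * c"
        define z2 where "z2 = bb ?m * c'"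
        have X: "X = z1 + z2" and Y: "Y = l * z1 + ?m * z2"
          using cc(2) s aab[OF lL] aab[OF NL[of l]] unfolding F_def z1_def z2_def by auto
        have "Re (z1 * cnj z2) > 0" unfolding z1_def z2_def
          using pos bbB[OF lL] bbB[OF NL[of l]] cC cC' by blast
        hence lt: "cmod z2 < cmod X" using X cmod_sum_gt by simp
        hence X0: "X \<noteq> 0" by auto
        have "Y / X - l = (?m - l) * z2 / X" using X0 unfolding X Y
          by (simp add: field_simps)
        hence "cmod (Y / X - l) = cmod (?m - l) * (cmod z2 / cmod X)"
          by (simp add: norm_mult norm_divide)
        also have "\<dots> < cmod (?m - l) * 1"
          using lt Nne[of l] X0 by (intro mult_strict_left_mono) auto
        finally have "cmod (Y / X - l) < cmod (l - ?m)" by (simp add: norm_minus_commute)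
        thus "l \<in> T" unfolding T_def using lL by simp
      qed
      have "card {x \<in> D. F x = s} = card (fst ` {x \<in> D. F x = s})"
        using card_image[OF inj] by simp
      also have "\<dots> \<le> card T" using sub by (rule card_mono[rotated]) (simp add: T_def fL)
      finally show ?thesis using cT by simp
    qed
    have "D = (\<Union>s\<in>F ` D. {x \<in> D. F x = s})" by auto
    hence "card D \<le> (\<Sum>s\<in>F ` D. card {x \<in> D. F x = s})"
      using card_UN_le[of "F ` D" "\<lambda>s. {x \<in> D. F x = s}"] fD by simp
    also have "\<dots> \<le> (\<Sum>s\<in>F ` D. 10)" by (rule sum_mono) (rule fib)
    also have "\<dots> = 10 * card (F ` D)" by simp
    also have "\<dots> \<le> 10 * card (SB \<times> SA)"
      using card_mono[OF _ FD] fSA fSB by simp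
    finally have "card D \<le> 10 * (card SB * card SA)" by (simp add: card_cartesian_product)
    moreover have "card D = card L * card C ^ 2" unfolding D_def
      by (simp add: card_cartesian_product power2_eq_square)
    ultimately show ?thesis unfolding L_def SA_def SB_def by (simp add: mult.commute)
  qed
qed

lemma pigeon:
  assumes "finite I" "I \<noteq> {}" "X \<subseteq> (\<Union>i\<in>I. G i)" "\<forall>i\<in>I. finite (G i)"
  shows "\<exists>i\<in>I. card X \<le> card I * card (G i)"
proof -
  have "Max ((\<lambda>i. card (G i)) ` I) \<in> (\<lambda>i. card (G i)) ` I"
    using assms by (intro Max_in) auto
  then obtain i0 where i0: "i0 \<in> I" "card (G i0) = Max ((\<lambda>i. card (G i)) ` I)" by auto
  have le: "\<forall>i\<in>I. card (G i) \<le> card (G i0)" using i0 assms(1) by simp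
  have "card X \<le> card (\<Union>i\<in>I. G i)" using assms by (intro card_mono) auto
  also have "\<dots> \<le> (\<Sum>i\<in>I. card (G i))" using card_UN_le[OF assms(1)] .
  also have "\<dots> \<le> card I * card (G i0)" using sum_bounded_above[OF le[rule_format]] by simp
  finally show ?thesis using i0 by blast
qed

lemma sector_pos:
  assumes "cls b = cls b'" "cls c = cls c'" "b \<noteq> 0" "b' \<noteq> 0" "c \<noteq> 0" "c' \<noteq> 0"
  shows "Re ((b*c) * cnj (b'*c')) > 0"
proof -
  have "(b*c) * cnj (b'*c') = (rcis (cmod b) (Arg b) * rcis (cmod c) (Arg c)) *
          (rcis (cmod b') (- Arg b') * rcis (cmod c') (- Arg c'))"
    by (simp add: rcis_cmod_Arg rcis_cnj[symmetric])
  also have "\<dots> = rcis (cmod b * cmod c * (cmod b' * cmod c')) (Arg b + Arg c + (- Arg b' + - Arg c'))"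
    by (simp add: rcis_mult)
  finally have e: "Re ((b*c) * cnj (b'*c')) = cmod b * cmod c * (cmod b' * cmod c') * cos (Arg b + Arg c + (- Arg b' + - Arg c'))"
    by simp
  have h1: "\<bar>Arg b - Arg b'\<bar> < pi/4" and h2: "\<bar>Arg c - Arg c'\<bar> < pi/4" using cls_close assms by auto
  have "- (pi/2) < Arg b + Arg c + (- Arg b' + - Arg c')" "Arg b + Arg c + (- Arg b' + - Arg c') < pi/2"
    using h1 h2 abs_less_iff[of "Arg b - Arg b'" "pi/4"] abs_less_iff[of "Arg c - Arg c'" "pi/4"] by linarith+
  hence "cos (Arg b + Arg c + (- Arg b' + - Arg c')) > 0" by (rule cos_gt_zero_pi)
  moreover have "cmod b * cmod c * (cmod b' * cmod c') > 0" using assms by simp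
  ultimately show ?thesis unfolding e by simp
qed

theorem lemma2:
  "\<exists>c::real. c > 0 \<and>
     (\<forall>A B C :: complex set.
        finite A \<and> finite B \<and> finite C \<and> A \<noteq> {} \<and> B \<noteq> {} \<and> C \<noteq> {} \<and>
        0 \<notin> A \<and> 0 \<notin> B \<and> 0 \<notin> C \<longrightarrow>
        real (card (sumset (prodset A C) (prodset A C))) * real (card (sumset (prodset B C) (prodset B C)))
          \<ge> c * real (card (quotset A B)) * real (card C) ^ 2)"
proof (intro exI[of _ "1/7290"] conjI allI impI)
  show "(0::real) < 1/7290" by simp
  fix A B C :: "complex set"
  assume h: "finite A \<and> finite B \<and> finite C \<and> A \<noteq> {} \<and> B \<noteq> {} \<and> C \<noteq> {} \<and>
        0 \<notin> A \<and> 0 \<notin> B \<and> 0 \<notin> C"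
  hence fA: "finite A" and fB: "finite B" and fC: "finite C" and Cne: "C \<noteq> {}"
    and A0: "0 \<notin> A" and B0: "0 \<notin> B" and C0: "0 \<notin> C" by auto
  define I where "I = {0..8::nat}"
  define Bk where "Bk k = {b \<in> B. cls b = k}" for k
  define Cj where "Cj k = {c \<in> C. cls c = k}" for k
  define SA where "SA = sumset (prodset A C) (prodset A C)"
  define SB where "SB = sumset (prodset B C) (prodset B C)"
  have cI: "card I = 9" unfolding I_def by simp
  have fI: "finite I" and nI: "I \<noteq> {}" unfolding I_def by auto
  have s1: "quotset A B \<subseteq> (\<Union>k\<in>I. quotset A (Bk k))"
    unfolding quotset_def Bk_def I_def using cls_range by fastforce
  have f1: "\<forall>i\<in>I. finite (quotset A (Bk i))" using fA fB by (auto simp: Bk_def intro!: finite_quotset)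
  obtain k where k: "card (quotset A B) \<le> 9 * card (quotset A (Bk k))"
    using pigeon[OF fI nI s1 f1] cI by auto
  have s2: "C \<subseteq> (\<Union>k\<in>I. Cj k)" unfolding Cj_def I_def using cls_range by fastforce
  have f2: "\<forall>i\<in>I. finite (Cj i)" using fC by (auto simp: Cj_def)
  obtain j where j: "card C \<le> 9 * card (Cj j)"
    using pigeon[OF fI nI s2 f2] cI by auto
  have fCj: "finite (Cj j)" and fBk: "finite (Bk k)" using fC fB by (auto simp: Cj_def Bk_def)
  have "Cj j \<noteq> {}" using j Cne fC by (cases "Cj j = {}") auto
  have m: "card (quotset A (Bk k)) * card (Cj j) ^ 2 \<le>
           10 * (card (sumset (prodset A (Cj j)) (prodset A (Cj j))) *
                 card (sumset (prodset (Bk k) (Cj j)) (prodset (Bk k) (Cj j))))"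
  proof (rule main_lemma[OF fA fBk fCj A0 _ _ \<open>Cj j \<noteq> {}\<close>])
    show "0 \<notin> Bk k" using B0 by (auto simp: Bk_def)
    show "0 \<notin> Cj j" using C0 by (auto simp: Cj_def)
    show "\<forall>b\<in>Bk k. \<forall>b'\<in>Bk k. \<forall>c\<in>Cj j. \<forall>c'\<in>Cj j. 0 < Re (b * c * cnj (b' * c'))"
    proof (intro ballI)
      fix b b' c c' assume "b \<in> Bk k" "b' \<in> Bk k" "c \<in> Cj j" "c' \<in> Cj j"
      thus "0 < Re (b * c * cnj (b' * c'))" using B0 C0
        by (intro sector_pos) (auto simp: Bk_def Cj_def)
    qed
  qed
  have "card (sumset (prodset A (Cj j)) (prodset A (Cj j))) \<le> card SA"
    unfolding SA_def by (intro card_mono finite_sumset finite_prodset fA fC sumset_mono prodset_mono)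
      (auto simp: Cj_def)
  moreover have "card (sumset (prodset (Bk k) (Cj j)) (prodset (Bk k) (Cj j))) \<le> card SB"
    unfolding SB_def by (intro card_mono finite_sumset finite_prodset fB fC sumset_mono prodset_mono)
      (auto simp: Cj_def Bk_def)
  ultimately have m2: "card (quotset A (Bk k)) * card (Cj j) ^ 2 \<le> 10 * (card SA * card SB)"
    using m by (meson le_trans mult_le_mono mult_le_mono2 order_refl)
  have "card C ^ 2 \<le> (9 * card (Cj j)) ^ 2" using j by (rule power_mono) simp
  hence "card (quotset A B) * card C ^ 2 \<le> (9 * card (quotset A (Bk k))) * (9 * card (Cj j)) ^ 2"
    using k by (rule mult_le_mono[rotated])
  also have "\<dots> = 729 * (card (quotset A (Bk k)) * card (Cj j) ^ 2)" by (simp add: power2_eq_square)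
  also have "\<dots> \<le> 729 * (10 * (card SA * card SB))" using m2 by simp
  finally have "card (quotset A B) * card C ^ 2 \<le> 7290 * (card SA * card SB)" by simp
  hence "real (card (quotset A B) * card C ^ 2) \<le> real (7290 * (card SA * card SB))"
    by (rule of_nat_mono)
  thus "real (card (sumset (prodset A C) (prodset A C))) * real (card (sumset (prodset B C) (prodset B C)))
          \<ge> 1/7290 * real (card (quotset A B)) * real (card C) ^ 2"
    unfolding SA_def SB_def by simp
qed

end
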